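(* Let $A=\{a_1,\dots,a_{3k}\}$ be an instance of 3-PARTITION with $a^2$ divisible by $7$, and let $G(A)$ be the bipartite network constructed from $A$ as described in the context. In any division of $G(A)$ with maximal bipartite modularity, none of the bicliques $K_1,\dots,K_k$ is divided (i.e., for each $t$, all vertices of $K_t$ lie in a single community).
   Context: An instance of 3-PARTITION is a set of $3k$ positive integers $A=\{a_1,\dots,a_{3k}\}$ such that $a=\sum_{i=1}^{3k}a_i=kb$ and $b/4<a_i<b/2$ for all $i$, for some integer $b$. The bipartite network $G(A)$ (vertices colored red/blue, every edge joining a red and a blue vertex) is built as follows. (1) Construct $k$ complete bipartite networks (bicliques) $K_1,\dots,K_k$, each with $a$ red and $a$ blue vertices. (2) For each $i=1,\dots,3k$ add a red vertex $x_i$ and a blue vertex $y_i$ (element vertices). (3) For each $i$, connect $x_i$ to $a_i$ blue vertices in each of the $k$ bicliques, in such a way that each blue vertex of every biclique is adjacent to exactly one red element vertex; similarly connect $y_i$ to $a_i$ red vertices in each biclique so that each red vertex of every biclique is adjacent to exactly one blue element vertex. (4) For each $i$, add the edge $x_iy_i$. (5) For each $i$, construct a star $X_i$ with one blue internal vertex and $a^2/7$ red leaves, and a star $Y_i$ with one red internal vertex and $a^2/7$ blue leaves. (6) For each $i$, connect $x_i$ to the internal vertex of $X_i$ and $y_i$ to the internal vertex of $Y_i$. A division of the vertex set is a partition into communities. With $m$ the number of edges, Barber's bipartite modularity is $Q_b(\mathcal{C})=\sum_{C\in\mathcal{C}}\left(\frac{m_C}{m}-\frac{R_CB_C}{m^2}\right)$,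 where $m_C$ is the number of edges inside $C$ and $R_C$ (resp. $B_C$) is the sum of degrees of red (resp. blue) vertices in $C$. A division with maximal bipartite modularity is one maximizing $Q_b$ over all divisions. *)

theory Defs
  imports Complex_Main "HOL-Library.Disjoint_Sets"
begin

text \<open>A bipartite network is given by a set Red of red vertices, a set Blue of blue
vertices and a set E of edges, each edge being a pair (r, b) with r red and b blue.\<close>

definition bdeg :: "('v \<times> 'v) set \<Rightarrow> 'v \<Rightarrow> nat" where
  "bdeg E v = card {e \<in> E. fst e = v \<or> snd e = v}"

definition Qb :: "'v set \<Rightarrow> 'v set \<Rightarrow> ('v \<times> 'v) set \<Rightarrow> 'v set set \<Rightarrow> real" where
  "Qb Red Blue E P =
     (\<Sum>C\<in>P. real (card {e \<in> E. fst e \<in> C \<and> snd e \<in> C}) / real (card E)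
            - real (\<Sum>v\<in>C \<inter> Red. bdeg E v) * real (\<Sum>v\<in>C \<inter> Blue. bdeg E v)
              / (real (card E))^2)"

definition max_division :: "'v set \<Rightarrow> 'v set \<Rightarrow> ('v \<times> 'v) set \<Rightarrow> 'v set set \<Rightarrow> bool" where
  "max_division Red Blue E P \<longleftrightarrow>
     partition_on (Red \<union> Blue) P \<and>
     (\<forall>P'. partition_on (Red \<union> Blue) P' \<longrightarrow> Qb Red Blue E P' \<le> Qb Red Blue E P)"

text \<open>Elements a_1..a_{3k} are represented as as 0, ..., as (3k-1).\<close>
definition three_partition_instance :: "nat \<Rightarrow> nat \<Rightarrow> (nat \<Rightarrow> nat) \<Rightarrow> bool" where
  "three_partition_instance k b as \<longleftrightarrow>
     (\<forall>i<3*k. 0 < as i \<and> real b / 4 < real (as i) \<and> real (as i) < real b / 2) \<and>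
     (\<Sum>i<3*k. as i) = k * b"

definition asum :: "nat \<Rightarrow> (nat \<Rightarrow> nat) \<Rightarrow> nat" where
  "asum k as = (\<Sum>i<3*k. as i)"

datatype vtx =
    KR nat nat   \<comment> \<open>KR t j: j-th red vertex of biclique K_t\<close>
  | KB nat nat   \<comment> \<open>KB t j: j-th blue vertex of biclique K_t\<close>
  | X nat        \<comment> \<open>red element vertex x_i\<close>
  | Y nat        \<comment> \<open>blue element vertex y_i\<close>
  | XC nat       \<comment> \<open>blue internal vertex of star X_i\<close>
  | XL nat nat   \<comment> \<open>red leaves of star X_i\<close>
  | YC nat       \<comment> \<open>red internal vertex of star Y_i\<close>
  | YL nat nat   \<comment> \<open>blue leaves of star Y_i\<close>

text \<open>Step (3) leaves a choice: f t j is the index of the element vertex adjacent to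
the j-th (blue resp. red) vertex of biclique K_t.\<close>
definition valid_assign :: "nat \<Rightarrow> (nat \<Rightarrow> nat) \<Rightarrow> (nat \<Rightarrow> nat \<Rightarrow> nat) \<Rightarrow> bool" where
  "valid_assign k as f \<longleftrightarrow>
     (\<forall>t<k. \<forall>j<asum k as. f t j < 3*k) \<and>
     (\<forall>t<k. \<forall>i<3*k. card {j. j < asum k as \<and> f t j = i} = as i)"

definition GA_red :: "nat \<Rightarrow> (nat \<Rightarrow> nat) \<Rightarrow> vtx set" where
  "GA_red k as =
     {KR t j | t j. t < k \<and> j < asum k as} \<union> {X i | i. i < 3*k}
     \<union> {XL i l | i l. i < 3*k \<and> l < (asum k as)^2 div 7} \<union> {YC i | i. i < 3*k}"

definition GA_blue :: "nat \<Rightarrow> (nat \<Rightarrow> nat) \<Rightarrow> vtx set" where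
  "GA_blue k as =
     {KB t j | t j. t < k \<and> j < asum k as} \<union> {Y i | i. i < 3*k}
     \<union> {YL i l | i l. i < 3*k \<and> l < (asum k as)^2 div 7} \<union> {XC i | i. i < 3*k}"

definition GA_edges :: "nat \<Rightarrow> (nat \<Rightarrow> nat) \<Rightarrow> (nat \<Rightarrow> nat \<Rightarrow> nat) \<Rightarrow> (nat \<Rightarrow> nat \<Rightarrow> nat)
     \<Rightarrow> (vtx \<times> vtx) set" where
  "GA_edges k as fr fb =
     {(KR t j, KB t j') | t j j'. t < k \<and> j < asum k as \<and> j' < asum k as}
     \<union> {(X i, KB t j) | i t j. i < 3*k \<and> t < k \<and> j < asum k as \<and> fb t j = i}
     \<union> {(KR t j, Y i) | i t j. i < 3*k \<and> t < k \<and> j < asum k as \<and> fr t j = i}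
     \<union> {(X i, Y i) | i. i < 3*k}
     \<union> {(XL i l, XC i) | i l. i < 3*k \<and> l < (asum k as)^2 div 7}
     \<union> {(YC i, YL i l) | i l. i < 3*k \<and> l < (asum k as)^2 div 7}
     \<union> {(X i, XC i) | i. i < 3*k}
     \<union> {(YC i, Y i) | i. i < 3*k}"

definition biclique :: "nat \<Rightarrow> (nat \<Rightarrow> nat) \<Rightarrow> nat \<Rightarrow> vtx set" where
  "biclique k as t = {KR t j | j. j < asum k as} \<union> {KB t j | j. j < asum k as}"

end

theory Submission
  imports Defs
begin


lemma sq_sum_le:
  fixes f :: "'i \<Rightarrow> real"
  assumes "finite I" "\<And>i. i \<in> I \<Longrightarrow> f i \<ge> 0"
  shows "(\<Sum>i\<in>I. f i ^ 2) \<le> (\<Sum>i\<in>I. f i) ^ 2"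
proof -
  have "(\<Sum>i\<in>I. f i ^ 2) \<le> (\<Sum>i\<in>I. f i * (\<Sum>j\<in>I. f j))"
  proof (rule sum_mono)
    fix i assume i: "i \<in> I"
    have "f i \<le> (\<Sum>j\<in>I. f j)" using member_le_sum[OF i] assms by blast
    thus "f i ^ 2 \<le> f i * (\<Sum>j\<in>I. f j)" using assms(2)[OF i]
      by (simp add: power2_eq_square mult_left_mono)
  qed
  also have "\<dots> = (\<Sum>i\<in>I. f i) ^ 2" by (simp add: power2_eq_square sum_distrib_right)
  finally show ?thesis .
qed

lemma comb_ineq:
  fixes r s :: "'i \<Rightarrow> real"
  assumes fin: "finite I" and r0: "\<And>i. i \<in> I \<Longrightarrow> r i \<ge> 0" and s0: "\<And>i. i \<in> I \<Longrightarrow> s i \<ge> 0"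
    and sr: "(\<Sum>i\<in>I. r i) = a" and ss: "(\<Sum>i\<in>I. s i) = a"
  shows "(\<Sum>i\<in>I. (r i + s i) * (a - min (r i) (s i))) \<le> 3 * (a^2 - (\<Sum>i\<in>I. r i * s i))"
proof -
  define \<mu> where "\<mu> i = min (r i) (s i)" for i
  define r' where "r' i = r i - \<mu> i" for i
  define s' where "s' i = s i - \<mu> i" for i
  define Ex where "Ex = (\<Sum>i\<in>I. r' i)"
  have Ex2: "Ex = (\<Sum>i\<in>I. s' i)"
    using sr ss by (simp add: Ex_def r'_def s'_def sum_subtractf)
  have mu0: "\<mu> i \<ge> 0" if "i \<in> I" for i using r0[OF that] s0[OF that] by (simp add: \<mu>_def)
  have r'0: "r' i \<ge> 0" for i by (simp add: r'_def \<mu>_def)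
  have s'0: "s' i \<ge> 0" for i by (simp add: s'_def \<mu>_def)
  have rs': "r' i * s' i = 0" for i by (simp add: r'_def s'_def \<mu>_def min_def)
  have le1: "r' i + s' i \<le> Ex" if "i \<in> I" for i
  proof -
    have "r' i \<le> Ex" unfolding Ex_def using member_le_sum[OF that, of r'] r'0 fin by blast
    moreover have "s' i \<le> Ex" unfolding Ex2 using member_le_sum[OF that, of s'] s'0 fin by blast
    ultimately show ?thesis using rs'[of i] r'0[of i] s'0[of i]
      by (cases "r' i = 0") auto
  qed
  have a_eq: "a = (\<Sum>i\<in>I. \<mu> i) + Ex"
    using sr by (simp add: Ex_def r'_def sum_subtractf)
  have t1: "(\<Sum>i\<in>I. \<mu> i * (r' i + s' i)) \<le> (\<Sum>i\<in>I. \<mu> i * Ex)"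
    by (rule sum_mono) (use le1 mu0 in \<open>simp add: mult_left_mono\<close>)
  have t2: "(\<Sum>i\<in>I. \<mu> i ^ 2) \<le> (\<Sum>i\<in>I. \<mu> i) ^ 2" by (rule sq_sum_le[OF fin mu0])
  have Exge: "Ex \<ge> 0" unfolding Ex_def by (rule sum_nonneg) (use r'0 in auto)
  have key: "(\<Sum>i\<in>I. \<mu> i ^ 2) + 2 * (\<Sum>i\<in>I. \<mu> i * (r' i + s' i)) \<le> a^2"
  proof -
    have "(\<Sum>i\<in>I. \<mu> i * Ex) = (\<Sum>i\<in>I. \<mu> i) * Ex" by (simp add: sum_distrib_right)
    moreover have "(\<Sum>i\<in>I. \<mu> i) \<ge> 0" by (rule sum_nonneg) (use mu0 in auto)
    ultimately have "(\<Sum>i\<in>I. \<mu> i ^ 2) + 2 * (\<Sum>i\<in>I. \<mu> i * (r' i + s' i)) \<le> (\<Sum>i\<in>I. \<mu> i)^2 + 2 * ((\<Sum>i\<in>I. \<mu> i) * Ex)"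
      using t1 t2 by linarith
    also have "\<dots> \<le> ((\<Sum>i\<in>I. \<mu> i) + Ex)^2" using Exge by (simp add: power2_eq_square algebra_simps)
    finally show ?thesis using a_eq by simp
  qed
  have e1: "(r i + s i) * (a - min (r i) (s i)) = 2 * a * \<mu> i + a * (r' i + s' i) - 2 * \<mu> i ^ 2 - \<mu> i * (r' i + s' i)" for i
    by (simp add: r'_def s'_def \<mu>_def[symmetric] power2_eq_square algebra_simps)
  have e2: "r i * s i = \<mu> i ^ 2 + \<mu> i * (r' i + s' i)" for i
    using rs'[of i] by (simp add: r'_def s'_def power2_eq_square algebra_simps)
  have "(\<Sum>i\<in>I. (r i + s i) * (a - min (r i) (s i)))
      = 2 * a * (\<Sum>i\<in>I. \<mu> i) + a * (\<Sum>i\<in>I. (r' i + s' i)) - 2 * (\<Sum>i\<in>I. \<mu> i ^ 2) - (\<Sum>i\<in>I. \<mu> i * (r' i + s' i))"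
    unfolding e1 by (simp add: sum_subtractf sum.distrib sum_distrib_left[symmetric])
  also have "(\<Sum>i\<in>I. (r' i + s' i)) = 2 * Ex" using Ex2 by (simp add: sum.distrib Ex_def)
  finally have L: "(\<Sum>i\<in>I. (r i + s i) * (a - min (r i) (s i)))
      = 2 * a * (\<Sum>i\<in>I. \<mu> i) + a * (2 * Ex) - 2 * (\<Sum>i\<in>I. \<mu> i ^ 2) - (\<Sum>i\<in>I. \<mu> i * (r' i + s' i))" .
  have R: "(\<Sum>i\<in>I. r i * s i) = (\<Sum>i\<in>I. \<mu> i ^ 2) + (\<Sum>i\<in>I. \<mu> i * (r' i + s' i))"
    unfolding e2 by (simp add: sum.distrib)
  show ?thesis unfolding L R using key a_eq by (simp add: power2_eq_square algebra_simps)
qed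



locale kg =
  fixes Red Blue :: "'v set" and E :: "('v \<times> 'v) set" and KR KB :: "'v set" and a :: nat
  assumes finR: "finite Red" and finB: "finite Blue" and disj: "Red \<inter> Blue = {}"
   and Esub: "E \<subseteq> Red \<times> Blue"
   and KRsub: "KR \<subseteq> Red" and KBsub: "KB \<subseteq> Blue"
   and cKR: "card KR = a" and cKB: "card KB = a"
   and KE: "KR \<times> KB \<subseteq> E"
   and degR: "\<And>v. v \<in> KR \<Longrightarrow> card {e\<in>E. fst e = v} = a + 1"
   and degB: "\<And>v. v \<in> KB \<Longrightarrow> card {e\<in>E. snd e = v} = a + 1"
   and apos: "a > 0"
   and mbig: "real (card E) * (real a - 3) > (real a + 1)^2 * real a"
begin

definition "ec C = card {e\<in>E. fst e \<in> C \<and> snd e \<in> C}"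
definition "rd C = card {e\<in>E. fst e \<in> C}"
definition "bd C = card {e\<in>E. snd e \<in> C}"
definition "K = KR \<union> KB"

lemma finE: "finite E" using Esub finR finB finite_subset by blast
lemma finKR: "finite KR" using KRsub finR finite_subset by blast
lemma finKB: "finite KB" using KBsub finB finite_subset by blast

lemma sum_bdeg_red: "(\<Sum>v\<in>C \<inter> Red. bdeg E v) = rd C"
proof -
  have 1: "bdeg E v = card {e\<in>E. fst e = v}" if "v \<in> Red" for v
  proof -
    have "{e\<in>E. fst e = v \<or> snd e = v} = {e\<in>E. fst e = v}" using that Esub disj by auto
    thus ?thesis by (simp add: bdeg_def)
  qed
  have "(\<Sum>v\<in>C \<inter> Red. bdeg E v) = (\<Sum>v\<in>C \<inter> Red. card {e\<in>E. fst e = v})"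
    using 1 by simp
  also have "\<dots> = card (\<Union>v\<in>C \<inter> Red. {e\<in>E. fst e = v})"
    by (rule card_UN_disjoint[symmetric]) (use finR finE in auto)
  also have "(\<Union>v\<in>C \<inter> Red. {e\<in>E. fst e = v}) = {e\<in>E. fst e \<in> C}" using Esub by auto
  finally show ?thesis by (simp add: rd_def)
qed

lemma sum_bdeg_blue: "(\<Sum>v\<in>C \<inter> Blue. bdeg E v) = bd C"
proof -
  have 1: "bdeg E v = card {e\<in>E. snd e = v}" if "v \<in> Blue" for v
  proof -
    have "{e\<in>E. fst e = v \<or> snd e = v} = {e\<in>E. snd e = v}" using that Esub disj by auto
    thus ?thesis by (simp add: bdeg_def)
  qed
  have "(\<Sum>v\<in>C \<inter> Blue. bdeg E v) = (\<Sum>v\<in>C \<inter> Blue. card {e\<in>E. snd e = v})"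
    using 1 by simp
  also have "\<dots> = card (\<Union>v\<in>C \<inter> Blue. {e\<in>E. snd e = v})"
    by (rule card_UN_disjoint[symmetric]) (use finB finE in auto)
  also have "(\<Union>v\<in>C \<inter> Blue. {e\<in>E. snd e = v}) = {e\<in>E. snd e \<in> C}" using Esub by auto
  finally show ?thesis by (simp add: bd_def)
qed

definition "F C = real (card E) * real (ec C) - real (rd C) * real (bd C)"

lemma Qb_eq: "Qb Red Blue E P = (\<Sum>C\<in>P. F C) / (real (card E))^2"
proof -
  have m0: "card E > 0" using KE apos cKR cKB finE
    by (metis card_gt_0_iff card_0_eq gr_implies_not0 finKR finKB Sigma_empty1 Sigma_empty2 subset_empty times_eq_iff) 
  show ?thesis
  unfolding Qb_def F_def sum_bdeg_red sum_bdeg_blue sum_divide_distrib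
  by (rule sum.cong) (use m0 in \<open>auto simp: ec_def field_simps power2_eq_square\<close>)
qed

lemma KR_red: "v \<in> KR \<Longrightarrow> v \<notin> Blue" using KRsub disj by auto
lemma KB_blue: "v \<in> KB \<Longrightarrow> v \<notin> Red" using KBsub disj by auto

lemma E_nKB: "(x, y) \<in> E \<Longrightarrow> x \<notin> KB" using Esub KBsub disj by blast
lemma E_nKR: "(x, y) \<in> E \<Longrightarrow> y \<notin> KR" using Esub KRsub disj by blast

lemma rd_split: "rd C = rd (C - K) + (a + 1) * card (C \<inter> KR)"
proof -
  have fin: "finite (C \<inter> KR)" using finKR by auto
  have "{e\<in>E. fst e \<in> C} = {e\<in>E. fst e \<in> C - K} \<union> {e\<in>E. fst e \<in> C \<inter> KR}"
    by (auto simp: K_def dest: E_nKB)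
  moreover have "{e\<in>E. fst e \<in> C - K} \<inter> {e\<in>E. fst e \<in> C \<inter> KR} = {}" by (auto simp: K_def)
  ultimately have "rd C = rd (C - K) + card {e\<in>E. fst e \<in> C \<inter> KR}"
    unfolding rd_def by (simp add: card_Un_disjoint finE)
  also have "{e\<in>E. fst e \<in> C \<inter> KR} = (\<Union>v\<in>C \<inter> KR. {e\<in>E. fst e = v})" by auto
  also have "card \<dots> = (\<Sum>v\<in>C \<inter> KR. card {e\<in>E. fst e = v})"
    by (rule card_UN_disjoint) (use fin finE in auto)
  also have "\<dots> = (\<Sum>v\<in>C \<inter> KR. a + 1)" by (rule sum.cong) (auto simp: degR)
  finally show ?thesis by simp
qed

lemma bd_split: "bd C = bd (C - K) + (a + 1) * card (C \<inter> KB)"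
proof -
  have fin: "finite (C \<inter> KB)" using finKB by auto
  have "{e\<in>E. snd e \<in> C} = {e\<in>E. snd e \<in> C - K} \<union> {e\<in>E. snd e \<in> C \<inter> KB}"
    by (auto simp: K_def dest: E_nKR)
  moreover have "{e\<in>E. snd e \<in> C - K} \<inter> {e\<in>E. snd e \<in> C \<inter> KB} = {}" by (auto simp: K_def)
  ultimately have "bd C = bd (C - K) + card {e\<in>E. snd e \<in> C \<inter> KB}"
    unfolding bd_def by (simp add: card_Un_disjoint finE)
  also have "{e\<in>E. snd e \<in> C \<inter> KB} = (\<Union>v\<in>C \<inter> KB. {e\<in>E. snd e = v})" by auto
  also have "card \<dots> = (\<Sum>v\<in>C \<inter> KB. card {e\<in>E. snd e = v})"
    by (rule card_UN_disjoint) (use fin finE in auto)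
  also have "\<dots> = (\<Sum>v\<in>C \<inter> KB. a + 1)" by (rule sum.cong) (auto simp: degB)
  finally show ?thesis by simp
qed

lemma out_R: "v \<in> KR \<Longrightarrow> card {e\<in>E. fst e = v \<and> snd e \<notin> KB} = 1"
proof -
  assume v: "v \<in> KR"
  have "{e\<in>E. fst e = v} = ({v} \<times> KB) \<union> {e\<in>E. fst e = v \<and> snd e \<notin> KB}"
    using KE v by auto
  moreover have "({v} \<times> KB) \<inter> {e\<in>E. fst e = v \<and> snd e \<notin> KB} = {}" by auto
  ultimately have "a + 1 = a + card {e\<in>E. fst e = v \<and> snd e \<notin> KB}"
    using degR[OF v] cKB finKB finE by (simp add: card_Un_disjoint card_cartesian_product)
  thus ?thesis by simp
qed

lemma out_B: "v \<in> KB \<Longrightarrow> card {e\<in>E. snd e = v \<and> fst e \<notin> KR} = 1"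
proof -
  assume v: "v \<in> KB"
  have "{e\<in>E. snd e = v} = (KR \<times> {v}) \<union> {e\<in>E. snd e = v \<and> fst e \<notin> KR}"
    using KE v by auto
  moreover have "(KR \<times> {v}) \<inter> {e\<in>E. snd e = v \<and> fst e \<notin> KR} = {}" by auto
  ultimately have "a + 1 = a + card {e\<in>E. snd e = v \<and> fst e \<notin> KR}"
    using degB[OF v] cKR finKR finE by (simp add: card_Un_disjoint card_cartesian_product)
  thus ?thesis by simp
qed

lemma ec_upper: "ec C \<le> ec (C - K) + card (C \<inter> KR) * card (C \<inter> KB) + card (C \<inter> KR) + card (C \<inter> KB)"
proof -
  let ?A = "{e\<in>E. fst e \<in> C - K \<and> snd e \<in> C - K}"
  let ?B = "(C \<inter> KR) \<times> (C \<inter> KB)"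
  let ?C = "\<Union>v\<in>C \<inter> KR. {e\<in>E. fst e = v \<and> snd e \<notin> KB}"
  let ?D = "\<Union>v\<in>C \<inter> KB. {e\<in>E. snd e = v \<and> fst e \<notin> KR}"
  have sub: "{e\<in>E. fst e \<in> C \<and> snd e \<in> C} \<subseteq> ?A \<union> ?B \<union> ?C \<union> ?D"
    by (auto simp: K_def dest: E_nKR E_nKB)
  have fins: "finite ?A" "finite ?B" "finite ?C" "finite ?D" using finE finKR finKB by auto
  have "card ?C \<le> (\<Sum>v\<in>C \<inter> KR. card {e\<in>E. fst e = v \<and> snd e \<notin> KB})"
    by (rule card_UN_le) (use finKR in auto)
  also have "\<dots> = card (C \<inter> KR)" by (simp add: out_R)
  finally have c: "card ?C \<le> card (C \<inter> KR)" .
  have "card ?D \<le> (\<Sum>v\<in>C \<inter> KB. card {e\<in>E. snd e = v \<and> fst e \<notin> KR})"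
    by (rule card_UN_le) (use finKB in auto)
  also have "\<dots> = card (C \<inter> KB)" by (simp add: out_B)
  finally have d: "card ?D \<le> card (C \<inter> KB)" .
  have "ec C \<le> card (?A \<union> ?B \<union> ?C \<union> ?D)" unfolding ec_def
    by (rule card_mono) (use fins sub in auto)
  also have "\<dots> \<le> card ?A + card ?B + card ?C + card ?D"
    by (meson add_le_mono card_Un_le le_refl order_trans)
  finally show ?thesis using c d by (simp add: ec_def card_cartesian_product)
qed

lemma ec_lower: "ec (C \<union> K) + card (C \<inter> KR) * card (C \<inter> KB) \<ge> ec C + a * a"
proof -
  let ?A = "{e\<in>E. fst e \<in> C \<and> snd e \<in> C}"
  have "?A \<union> (KR \<times> KB) \<subseteq> {e\<in>E. fst e \<in> C \<union> K \<and> snd e \<in> C \<union> K}" using KE by (auto simp: K_def)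
  hence "card (?A \<union> (KR \<times> KB)) \<le> ec (C \<union> K)" unfolding ec_def
    by (intro card_mono) (use finE in auto)
  moreover have "card ?A + card (KR \<times> KB) = card (?A \<union> (KR \<times> KB)) + card (?A \<inter> (KR \<times> KB))"
    by (rule card_Un_Int) (use finE finKR finKB in auto)
  moreover have "?A \<inter> (KR \<times> KB) = (C \<inter> KR) \<times> (C \<inter> KB)" using KE by auto
  ultimately show ?thesis using cKR cKB by (simp add: ec_def card_cartesian_product)
qed

lemma K_eq: "K = KR \<union> KB" by (simp add: K_def)

lemma K_ne: "K \<noteq> {}" using cKR apos by (auto simp: K_def)
lemma K_sub: "K \<subseteq> Red \<union> Blue" using KRsub KBsub by (auto simp: K_def)

definition "PT P T = insert (T \<union> K) ((\<lambda>C. C - K) ` (P - {T}) - {{}})"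
definition "P0 P = insert K ((\<lambda>C. C - K) ` P - {{}})"

lemma part_PT:
  assumes P: "partition_on (Red \<union> Blue) P" and T: "T \<in> P"
  shows "partition_on (Red \<union> Blue) (PT P T)"
proof (rule partition_onI)
  show "\<Union> (PT P T) = Red \<union> Blue"
    using partition_onD1[OF P] T K_sub by (auto simp: PT_def)
  show "{} \<notin> PT P T" using K_ne by (auto simp: PT_def)
  fix A B assume A: "A \<in> PT P T" and B: "B \<in> PT P T" and AB: "A \<noteq> B"
  have dj: "C \<inter> D = {}" if "C \<in> P" "D \<in> P" "C \<noteq> D" for C D
    using partition_onD2[OF P] that by (auto simp: disjoint_def)
  show "disjnt A B"
    using A B AB dj T unfolding PT_def disjnt_def by blast
qed

lemma part_P0:
  assumes P: "partition_on (Red \<union> Blue) P"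
  shows "partition_on (Red \<union> Blue) (P0 P)"
proof (rule partition_onI)
  show "\<Union> (P0 P) = Red \<union> Blue"
    using partition_onD1[OF P] K_sub by (auto simp: P0_def)
  show "{} \<notin> P0 P" using K_ne by (auto simp: P0_def)
  fix A B assume A: "A \<in> P0 P" and B: "B \<in> P0 P" and AB: "A \<noteq> B"
  have dj: "C \<inter> D = {}" if "C \<in> P" "D \<in> P" "C \<noteq> D" for C D
    using partition_onD2[OF P] that by (auto simp: disjoint_def)
  show "disjnt A B"
    using A B AB dj unfolding P0_def disjnt_def by blast
qed

lemma F_empty: "F {} = 0" by (simp add: F_def ec_def rd_def bd_def)

lemma sum_img:
  assumes P: "partition_on (Red \<union> Blue) P" and fin: "finite P" and Q: "Q \<subseteq> P"
  shows "(\<Sum>C\<in>(\<lambda>C. C - K) ` Q - {{}}. F C) = (\<Sum>C\<in>Q. F (C - K))"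
proof -
  have finQ: "finite Q" using fin Q finite_subset by blast
  have "(\<Sum>C\<in>(\<lambda>C. C - K) ` Q - {{}}. F C) = (\<Sum>C\<in>(\<lambda>C. C - K) ` Q. F C)"
  proof (cases "{} \<in> (\<lambda>C. C - K) ` Q")
    case True
    then show ?thesis using sum.remove[of "(\<lambda>C. C - K) ` Q" "{}" F] finQ F_empty by simp
  qed simp
  also have "\<dots> = (\<Sum>C\<in>Q. F (C - K))"
  proof (rule sum.reindex_nontrivial[OF finQ, simplified comp_def])
    fix x y assume "x \<in> Q" "y \<in> Q" "x \<noteq> y" "x - K = y - K"
    moreover have "x \<inter> y = {}" using partition_onD2[OF P] Q \<open>x \<in> Q\<close> \<open>y \<in> Q\<close> \<open>x \<noteq> y\<close>
      by (auto simp: disjoint_def)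
    ultimately have "x - K = {}" by blast
    thus "F (x - K) = 0" using F_empty by (simp only:)
  qed
  finally show ?thesis .
qed

lemma sum_PT:
  assumes P: "partition_on (Red \<union> Blue) P" and fin: "finite P" and T: "T \<in> P"
  shows "(\<Sum>C\<in>PT P T. F C) = (\<Sum>C\<in>P. F C) + (F (T \<union> K) - F (T - K)) - (\<Sum>C\<in>P. F C - F (C - K))"
proof -
  have nin: "T \<union> K \<notin> (\<lambda>C. C - K) ` (P - {T}) - {{}}" using K_ne by auto
  have "(\<Sum>C\<in>PT P T. F C) = F (T \<union> K) + (\<Sum>C\<in>P - {T}. F (C - K))"
    unfolding PT_def using nin fin sum_img[OF P fin, of "P - {T}"] by simp
  moreover have "(\<Sum>C\<in>P. F C) = F T + (\<Sum>C\<in>P - {T}. F C)" using sum.remove[OF fin T] by simp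
  moreover have "(\<Sum>C\<in>P. F (C - K)) = F (T - K) + (\<Sum>C\<in>P - {T}. F (C - K))" using sum.remove[OF fin T] by simp
  ultimately show ?thesis by (simp add: sum_subtractf)
qed

lemma sum_P0:
  assumes P: "partition_on (Red \<union> Blue) P" and fin: "finite P"
  shows "(\<Sum>C\<in>P0 P. F C) = (\<Sum>C\<in>P. F C) + F K - (\<Sum>C\<in>P. F C - F (C - K))"
proof -
  have nin: "K \<notin> (\<lambda>C. C - K) ` P - {{}}" using K_ne by auto
  have "(\<Sum>C\<in>P0 P. F C) = F K + (\<Sum>C\<in>P. F (C - K))"
    unfolding P0_def using nin fin sum_img[OF P fin, of "P"] by simp
  thus ?thesis by (simp add: sum_subtractf)
qed

lemma sum_card_part:
  assumes P: "partition_on (Red \<union> Blue) P" and fin: "finite P" and S: "S \<subseteq> Red \<union> Blue" "finite S"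
  shows "(\<Sum>C\<in>P. card (C \<inter> S)) = card S"
proof -
  have "card (\<Union>C\<in>P. C \<inter> S) = (\<Sum>C\<in>P. card (C \<inter> S))"
    by (rule card_UN_disjoint) (use fin S partition_onD2[OF P] in \<open>auto simp: disjoint_def\<close>)
  moreover have "(\<Union>C\<in>P. C \<inter> S) = S" using partition_onD1[OF P] S by auto
  ultimately show ?thesis by simp
qed

lemma exists_good:
  assumes P: "partition_on (Red \<union> Blue) P" and ns: "\<not> (\<exists>C\<in>P. K \<subseteq> C)"
  shows "\<exists>C\<in>P. card (C \<inter> KR) > 0 \<and> card (C \<inter> KB) < a"
proof -
  obtain v where v: "v \<in> KR" using cKR apos by fastforce
  then obtain C where C: "C \<in> P" "v \<in> C" using partition_onD1[OF P] KRsub by blast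
  have rC: "card (C \<inter> KR) > 0" using C v finKR by (auto simp: card_gt_0_iff)
  show ?thesis
  proof (cases "card (C \<inter> KB) < a")
    case True thus ?thesis using C rC by blast
  next
    case False
    hence "card (C \<inter> KB) = card KB" using cKB card_mono[OF finKB, of "C \<inter> KB"] by auto
    hence "C \<inter> KB = KB" using card_subset_eq[OF finKB, of "C \<inter> KB"] by auto
    hence "\<not> KR \<subseteq> C" using ns C by (auto simp: K_def)
    then obtain w where w: "w \<in> KR" "w \<notin> C" by blast
    then obtain D where D: "D \<in> P" "w \<in> D" using partition_onD1[OF P] KRsub by blast
    have "D \<noteq> C" using w D by auto
    hence "D \<inter> C = {}" using partition_onD2[OF P] D C by (auto simp: disjoint_def)
    hence "D \<inter> KB = {}" using \<open>C \<inter> KB = KB\<close> by blast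
    moreover have "card (D \<inter> KR) > 0" using D w finKR by (auto simp: card_gt_0_iff)
    ultimately show ?thesis using D apos by auto
  qed
qed

lemma main_ineq:
  assumes P: "partition_on (Red \<union> Blue) P" and ns: "\<not> (\<exists>C\<in>P. K \<subseteq> C)"
  defines "Z \<equiv> (\<Sum>C\<in>P. F C - F (C - K))"
  shows "(\<exists>T\<in>P. F (T \<union> K) - F (T - K) > Z) \<or> F K > Z"
proof (rule ccontr)
  assume nc: "\<not> ?thesis"
  hence DT: "\<And>T. T \<in> P \<Longrightarrow> F (T \<union> K) - F (T - K) \<le> Z" and DK: "F K \<le> Z" by auto
  have fin: "finite P" using finite_elements[OF _ P] finR finB by blast
  define m where "m = real (card E)"
  define d where "d = real a + 1"
  define A where "A = real a"
  define \<rho> where "\<rho> C = real (card (C \<inter> KR))" for C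
  define \<beta> where "\<beta> C = real (card (C \<inter> KB))" for C
  define lam where "lam C = min (\<rho> C) (\<beta> C)" for C
  define R' where "R' C = real (rd (C - K))" for C
  define B' where "B' C = real (bd (C - K))" for C
  define ell where "ell C = real (ec C) - real (ec (C - K)) - \<rho> C * \<beta> C" for C
  have sr: "(\<Sum>C\<in>P. \<rho> C) = A" unfolding \<rho>_def A_def
    using sum_card_part[OF P fin, of KR] KRsub finKR cKR by (auto simp flip: of_nat_sum)
  have sb: "(\<Sum>C\<in>P. \<beta> C) = A" unfolding \<beta>_def A_def
    using sum_card_part[OF P fin, of KB] KBsub finKB cKB by (auto simp flip: of_nat_sum)
  have r0: "\<rho> C \<ge> 0" "\<beta> C \<ge> 0" "R' C \<ge> 0" "B' C \<ge> 0" for C by (auto simp: \<rho>_def \<beta>_def R'_def B'_def)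
  have rA: "\<rho> C \<le> A" "\<beta> C \<le> A" for C
    unfolding \<rho>_def \<beta>_def A_def using card_mono[OF finKR, of "C \<inter> KR"] card_mono[OF finKB, of "C \<inter> KB"] cKR cKB by auto
  have l0: "lam C \<ge> 0" "lam C \<le> \<rho> C" "lam C \<le> \<beta> C" for C using r0 by (auto simp: lam_def)
  have ellle: "ell C \<le> \<rho> C + \<beta> C" for C
    using ec_upper[of C] unfolding ell_def \<rho>_def \<beta>_def by (simp flip: of_nat_mult of_nat_add)
  have ZC: "F C - F (C - K) = m * (\<rho> C * \<beta> C + ell C) - ((R' C + d * \<rho> C) * (B' C + d * \<beta> C) - R' C * B' C)" for C
    using rd_split[of C] bd_split[of C]
    unfolding F_def ell_def m_def R'_def B'_def d_def \<rho>_def \<beta>_def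
    by (simp add: algebra_simps)
  have DC: "F (C \<union> K) - F (C - K) \<ge> m * (ell C + A * A) - ((R' C + d * A) * (B' C + d * A) - R' C * B' C)" for C
  proof -
    have e1: "(C \<union> K) - K = C - K" by auto
    have e2: "(C \<union> K) \<inter> KR = KR" "(C \<union> K) \<inter> KB = KB" by (auto simp: K_def)
    have rr: "rd (C \<union> K) = rd (C - K) + (a+1) * a" using rd_split[of "C \<union> K"] e1 e2 cKR by simp
    have bb: "bd (C \<union> K) = bd (C - K) + (a+1) * a" using bd_split[of "C \<union> K"] e1 e2 cKB by simp
    have ee: "real (ec (C \<union> K)) \<ge> real (ec C) + A * A - \<rho> C * \<beta> C"
      using ec_lower[of C] unfolding A_def \<rho>_def \<beta>_def
      by (simp flip: of_nat_mult of_nat_add)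
    have mpos: "m \<ge> 0" by (simp add: m_def)
    have "m * (ell C + A * A) \<le> m * (real (ec (C \<union> K)) - real (ec (C - K)))"
      using mult_left_mono[OF _ mpos, of "ell C + A * A"] ee unfolding ell_def by simp
    thus ?thesis using rr bb unfolding F_def m_def R'_def B'_def d_def A_def
      by (simp add: algebra_simps)
  qed
  have FK: "F K \<ge> m * (A * A) - (d * A) * (d * A)"
  proof -
    have "ec ({} \<union> K) + 0 \<ge> ec {} + a * a" using ec_lower[of "{}"] by simp
    hence "real (ec K) \<ge> A * A" by (simp add: A_def flip: of_nat_mult)
    moreover have "rd K = (a+1) * a" using rd_split[of K] cKR by (simp add: K_def rd_def)
    moreover have "bd K = (a+1) * a" using bd_split[of K] cKB by (simp add: K_def bd_def)
    moreover have "real (card E) * (real a * real a) \<le> real (card E) * real (ec K)"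
      using calculation(1) by (simp add: A_def mult_left_mono)
    ultimately show ?thesis unfolding F_def m_def d_def A_def
      by (simp add: algebra_simps)
  qed
  have pw: "lam C * (F (C \<union> K) - F (C - K)) - A * (F C - F (C - K))
      \<ge> lam C * (m - d*d) * (A*A) - m * (\<rho> C + \<beta> C) * (A - lam C) - A * (m - d*d) * (\<rho> C * \<beta> C)" for C
  proof -
    have h1: "lam C * (F (C \<union> K) - F (C - K)) \<ge> lam C * (m * (ell C + A * A) - ((R' C + d * A) * (B' C + d * A) - R' C * B' C))"
      by (rule mult_left_mono[OF DC l0(1)])
    have Al: "A - lam C \<ge> 0" using rA[of C] l0[of C] by linarith
    have mpos: "m \<ge> 0" by (simp add: m_def)
    have h2: "m * ell C * (A - lam C) \<le> m * (\<rho> C + \<beta> C) * (A - lam C)"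
      using mult_right_mono[OF mult_left_mono[OF ellle mpos] Al] by simp
    have dpos: "d * A \<ge> 0" by (simp add: d_def A_def)
    have h3: "d * A * ((\<rho> C - lam C) * B' C + (\<beta> C - lam C) * R' C) \<ge> 0"
      using l0[of C] r0[of C] dpos by simp
    have id: "lam C * (m * (ell C + A * A) - ((R' C + d * A) * (B' C + d * A) - R' C * B' C))
         - A * (m * (\<rho> C * \<beta> C + ell C) - ((R' C + d * \<rho> C) * (B' C + d * \<beta> C) - R' C * B' C))
       = lam C * (m - d*d) * (A*A) - m * ell C * (A - lam C) + d * A * ((\<rho> C - lam C) * B' C + (\<beta> C - lam C) * R' C)
         - A * (m - d*d) * (\<rho> C * \<beta> C)"
      by (simp add: algebra_simps)
    have h4: "A * (F C - F (C - K)) = A * (m * (\<rho> C * \<beta> C + ell C) - ((R' C + d * \<rho> C) * (B' C + d * \<beta> C) - R' C * B' C))"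
      by (simp only: ZC)
    show ?thesis using h1 h2 h3 id h4 by linarith
  qed
  have sl: "(\<Sum>C\<in>P. lam C) \<le> A" using sr sum_mono[of P lam \<rho>] l0 by fastforce
  have sum1: "(\<Sum>C\<in>P. lam C * (F (C \<union> K) - F (C - K))) \<le> (\<Sum>C\<in>P. lam C) * Z"
    unfolding sum_distrib_right by (rule sum_mono) (use DT l0 in \<open>simp add: mult_left_mono\<close>)
  have sum2: "(A - (\<Sum>C\<in>P. lam C)) * F K \<le> (A - (\<Sum>C\<in>P. lam C)) * Z"
    using mult_left_mono[OF DK] sl by simp
  have sum3: "(A - (\<Sum>C\<in>P. lam C)) * F K \<ge> (A - (\<Sum>C\<in>P. lam C)) * (m * (A * A) - (d * A) * (d * A))"
    using mult_left_mono[OF FK] sl by simp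
  have sumpw: "(\<Sum>C\<in>P. lam C * (F (C \<union> K) - F (C - K)) - A * (F C - F (C - K)))
      \<ge> (\<Sum>C\<in>P. lam C * (m - d*d) * (A*A) - m * (\<rho> C + \<beta> C) * (A - lam C) - A * (m - d*d) * (\<rho> C * \<beta> C))"
    by (rule sum_mono) (rule pw)
  have split: "(\<Sum>C\<in>P. lam C * (m - d*d) * (A*A) - m * (\<rho> C + \<beta> C) * (A - lam C) - A * (m - d*d) * (\<rho> C * \<beta> C))
     = (\<Sum>C\<in>P. lam C) * ((m - d*d) * (A*A)) - m * (\<Sum>C\<in>P. (\<rho> C + \<beta> C) * (A - lam C)) - A * (m - d*d) * (\<Sum>C\<in>P. \<rho> C * \<beta> C)"
    by (simp add: sum_subtractf sum_distrib_left sum_distrib_right mult.assoc)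
  have split2: "(\<Sum>C\<in>P. lam C * (F (C \<union> K) - F (C - K)) - A * (F C - F (C - K)))
     = (\<Sum>C\<in>P. lam C * (F (C \<union> K) - F (C - K))) - A * Z"
    by (simp add: Z_def sum_subtractf sum_distrib_left[symmetric])
  define X where "X = A * A - (\<Sum>C\<in>P. \<rho> C * \<beta> C)"
  have comb: "(\<Sum>C\<in>P. (\<rho> C + \<beta> C) * (A - lam C)) \<le> 3 * X"
    using comb_ineq[OF fin, of \<rho> \<beta> A] r0 sr sb unfolding lam_def X_def by (simp add: power2_eq_square)
  have Xpos: "X > 0"
  proof -
    obtain C where C: "C \<in> P" "card (C \<inter> KR) > 0" "card (C \<inter> KB) < a" using exists_good[OF P ns] by blast
    have c1: "\<rho> C > 0" "\<beta> C < A" using C by (auto simp: \<rho>_def \<beta>_def A_def)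
    have "(\<Sum>D\<in>P. \<rho> D * \<beta> D) = \<rho> C * \<beta> C + (\<Sum>D\<in>P - {C}. \<rho> D * \<beta> D)"
      using sum.remove[OF fin C(1)] by simp
    also have "(\<Sum>D\<in>P - {C}. \<rho> D * \<beta> D) \<le> (\<Sum>D\<in>P - {C}. \<rho> D * A)"
      by (rule sum_mono) (use r0 rA in \<open>simp add: mult_left_mono\<close>)
    also have "(\<Sum>D\<in>P - {C}. \<rho> D * A) = (A - \<rho> C) * A"
      using sum.remove[OF fin C(1), of \<rho>] sr by (simp add: sum_distrib_right[symmetric])
    finally have "(\<Sum>D\<in>P. \<rho> D * \<beta> D) \<le> \<rho> C * \<beta> C + (A - \<rho> C) * A" by simp
    moreover have "\<rho> C * \<beta> C < \<rho> C * A" using c1 by simp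
    ultimately show ?thesis unfolding X_def by (simp add: algebra_simps)
  qed
  have big: "m * (A - 3) > d * d * A" using mbig unfolding m_def d_def A_def by (simp add: power2_eq_square)
  have "0 \<ge> (\<Sum>C\<in>P. lam C * (F (C \<union> K) - F (C - K)) - A * (F C - F (C - K))) + (A - (\<Sum>C\<in>P. lam C)) * F K"
    using split2 sum1 sum2 by (simp add: algebra_simps)
  moreover have "(\<Sum>C\<in>P. lam C * (F (C \<union> K) - F (C - K)) - A * (F C - F (C - K))) + (A - (\<Sum>C\<in>P. lam C)) * F K
      \<ge> A * (m - d*d) * X - m * (3 * X)"
  proof -
    have L: "(\<Sum>C\<in>P. lam C * (F (C \<union> K) - F (C - K)) - A * (F C - F (C - K))) + (A - (\<Sum>C\<in>P. lam C)) * F K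
       \<ge> (\<Sum>C\<in>P. lam C) * ((m - d*d) * (A*A)) - m * (\<Sum>C\<in>P. (\<rho> C + \<beta> C) * (A - lam C)) - A * (m - d*d) * (\<Sum>C\<in>P. \<rho> C * \<beta> C)
         + (A - (\<Sum>C\<in>P. lam C)) * (m * (A * A) - (d * A) * (d * A))"
      using sumpw split sum3 by linarith
    have M: "(\<Sum>C\<in>P. lam C) * ((m - d*d) * (A*A)) - m * (\<Sum>C\<in>P. (\<rho> C + \<beta> C) * (A - lam C)) - A * (m - d*d) * (\<Sum>C\<in>P. \<rho> C * \<beta> C)
         + (A - (\<Sum>C\<in>P. lam C)) * (m * (A * A) - (d * A) * (d * A))
        = A * (m - d*d) * X - m * (\<Sum>C\<in>P. (\<rho> C + \<beta> C) * (A - lam C))"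
      unfolding X_def by (simp add: algebra_simps)
    have N: "m * (\<Sum>C\<in>P. (\<rho> C + \<beta> C) * (A - lam C)) \<le> m * (3 * X)"
      using mult_left_mono[OF comb, of m] by (simp add: m_def)
    show ?thesis using L M N by linarith
  qed
  moreover have "A * (m - d*d) * X - m * (3 * X) > 0"
  proof -
    have "A * (m - d*d) * X - m * (3 * X) = X * (m * (A - 3) - d * d * A)" by (simp add: algebra_simps)
    thus ?thesis using Xpos big by simp
  qed
  ultimately show False by linarith
qed

lemma improve:
  assumes P: "partition_on (Red \<union> Blue) P" and ns: "\<not> (\<exists>C\<in>P. K \<subseteq> C)"
  shows "\<exists>P'. partition_on (Red \<union> Blue) P' \<and> Qb Red Blue E P' > Qb Red Blue E P"
proof -
  have fin: "finite P" using finite_elements[OF _ P] finR finB by blast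
  have m0: "card E > 0" using KE apos cKR cKB finE
    by (metis card_gt_0_iff card_0_eq gr_implies_not0 finKR finKB Sigma_empty1 Sigma_empty2 subset_empty times_eq_iff)
  hence m2: "(real (card E))^2 > 0" by simp
  from main_ineq[OF P ns] show ?thesis
  proof
    assume "\<exists>T\<in>P. F (T \<union> K) - F (T - K) > (\<Sum>C\<in>P. F C - F (C - K))"
    then obtain T where T: "T \<in> P" "F (T \<union> K) - F (T - K) > (\<Sum>C\<in>P. F C - F (C - K))" by blast
    have "(\<Sum>C\<in>PT P T. F C) > (\<Sum>C\<in>P. F C)" using sum_PT[OF P fin T(1)] T(2) by linarith
    hence "Qb Red Blue E (PT P T) > Qb Red Blue E P" unfolding Qb_eq using m2 by (simp add: divide_strict_right_mono)
    thus ?thesis using part_PT[OF P T(1)] by blast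
  next
    assume "F K > (\<Sum>C\<in>P. F C - F (C - K))"
    hence "(\<Sum>C\<in>P0 P. F C) > (\<Sum>C\<in>P. F C)" using sum_P0[OF P fin] by linarith
    hence "Qb Red Blue E (P0 P) > Qb Red Blue E P" unfolding Qb_eq using m2 by (simp add: divide_strict_right_mono)
    thus ?thesis using part_P0[OF P] by blast
  qed
qed

end


lemma seven_dvd: fixes n :: nat assumes "7 dvd n^2" shows "7 dvd n"
proof -
  have "n^2 mod 7 = (n mod 7)^2 mod 7" by (simp add: power_mod)
  moreover have "n mod 7 < 7" by simp
  moreover have "n mod 7 \<in> {0,1,2,3,4,5,6}" by auto
  ultimately have "n mod 7 = 0" using assms by (auto simp: dvd_eq_mod_eq_0)
  thus ?thesis by auto
qed

lemma poly_ineq: fixes x m :: real assumes "x \<ge> 7" "7 * m \<ge> 13 * x^2 + 14 * x + 63"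
  shows "m * (x - 3) > (x + 1)^2 * x"
proof -
  have "7 * m * (x - 3) \<ge> (13 * x^2 + 14 * x + 63) * (x - 3)"
    using assms by (intro mult_right_mono) auto
  moreover have "(13 * x^2 + 14 * x + 63) * (x - 3) > 7 * ((x + 1)^2 * x)"
  proof -
    have "x^2 * (2*x - 13) \<ge> x^2" using assms by (simp add: mult_left_mono[of 1 "2*x-13" "x^2", simplified])
    moreover have "x^2 \<ge> 7 * x" using assms by (simp add: power2_eq_square)
    moreover have "(13 * x^2 + 14 * x + 63) * (x - 3) - 7 * ((x + 1)^2 * x) = 3 * (x^2 * (2*x - 13)) + 14 * x - 189"
      by (simp add: power2_eq_square algebra_simps)
    ultimately show ?thesis using assms by linarith
  qed
  ultimately show ?thesis by linarith
qed

lemma fin_red: "finite (GA_red k as)"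
proof -
  have "GA_red k as \<subseteq> (\<lambda>(t,j). KR t j) ` ({..<k} \<times> {..<asum k as}) \<union> X ` {..<3*k}
     \<union> (\<lambda>(i,l). XL i l) ` ({..<3*k} \<times> {..<(asum k as)^2 div 7}) \<union> YC ` {..<3*k}"
    unfolding GA_red_def by auto
  thus ?thesis by (rule finite_subset) auto
qed

lemma fin_blue: "finite (GA_blue k as)"
proof -
  have "GA_blue k as \<subseteq> (\<lambda>(t,j). KB t j) ` ({..<k} \<times> {..<asum k as}) \<union> Y ` {..<3*k}
     \<union> (\<lambda>(i,l). YL i l) ` ({..<3*k} \<times> {..<(asum k as)^2 div 7}) \<union> XC ` {..<3*k}"
    unfolding GA_blue_def by auto
  thus ?thesis by (rule finite_subset) auto
qed

lemma rb_disj: "GA_red k as \<inter> GA_blue k as = {}"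
  unfolding GA_red_def GA_blue_def by auto

lemma E_sub: "GA_edges k as fr fb \<subseteq> GA_red k as \<times> GA_blue k as"
  unfolding GA_edges_def GA_red_def GA_blue_def by auto

lemma degR_c:
  assumes va: "valid_assign k as fr" and t: "t < k" and j: "j < asum k as"
  shows "card {e\<in>GA_edges k as fr fb. fst e = KR t j} = asum k as + 1"
proof -
  have fr: "fr t j < 3*k" using va t j by (simp add: valid_assign_def)
  have "{e\<in>GA_edges k as fr fb. fst e = KR t j} = (\<lambda>j'. (KR t j, KB t j')) ` {..<asum k as} \<union> {(KR t j, Y (fr t j))}"
    unfolding GA_edges_def using t j fr by auto
  moreover have "card ((\<lambda>j'. (KR t j, KB t j')) ` {..<asum k as}) = asum k as"
    by (subst card_image) (auto simp: inj_on_def)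
  ultimately show ?thesis by (simp add: card_insert_if) (auto)
qed

lemma degB_c:
  assumes va: "valid_assign k as fb" and t: "t < k" and j: "j < asum k as"
  shows "card {e\<in>GA_edges k as fr fb. snd e = KB t j} = asum k as + 1"
proof -
  have fb: "fb t j < 3*k" using va t j by (simp add: valid_assign_def)
  have "{e\<in>GA_edges k as fr fb. snd e = KB t j} = (\<lambda>j'. (KR t j', KB t j)) ` {..<asum k as} \<union> {(X (fb t j), KB t j)}"
    unfolding GA_edges_def using t j fb by auto
  moreover have "card ((\<lambda>j'. (KR t j', KB t j)) ` {..<asum k as}) = asum k as"
    by (subst card_image) (auto simp: inj_on_def)
  ultimately show ?thesis by (simp add: card_insert_if) (auto)
qed

lemma card_E_lower:
  assumes vr: "valid_assign k as fr" and vb: "valid_assign k as fb"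
  defines "n \<equiv> asum k as" and "L \<equiv> (asum k as)^2 div 7"
  shows "card (GA_edges k as fr fb) \<ge> k * n * n + k * n + k * n + 3*k + 3*k*L + 3*k*L + 3*k + 3*k"
proof -
  let ?P1 = "(\<lambda>(t,j,j'). (KR t j, KB t j')) ` ({..<k} \<times> {..<n} \<times> {..<n})"
  let ?P2 = "(\<lambda>(t,j). (X (fb t j), KB t j)) ` ({..<k} \<times> {..<n})"
  let ?P3 = "(\<lambda>(t,j). (KR t j, Y (fr t j))) ` ({..<k} \<times> {..<n})"
  let ?P4 = "(\<lambda>i. (X i, Y i)) ` {..<3*k}"
  let ?P5 = "(\<lambda>(i,l). (XL i l, XC i)) ` ({..<3*k} \<times> {..<L})"
  let ?P6 = "(\<lambda>(i,l). (YC i, YL i l)) ` ({..<3*k} \<times> {..<L})"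
  let ?P7 = "(\<lambda>i. (X i, XC i)) ` {..<3*k}"
  let ?P8 = "(\<lambda>i. (YC i, Y i)) ` {..<3*k}"
  have fbr: "fb t j < 3*k" "fr t j < 3*k" if "t < k" "j < n" for t j
    using vr vb that by (auto simp: valid_assign_def n_def)
  have sub: "?P1 \<union> ?P2 \<union> ?P3 \<union> ?P4 \<union> ?P5 \<union> ?P6 \<union> ?P7 \<union> ?P8 \<subseteq> GA_edges k as fr fb"
    unfolding GA_edges_def n_def L_def using fbr unfolding n_def by fastforce
  have finE: "finite (GA_edges k as fr fb)"
    using E_sub fin_red fin_blue finite_subset by (metis finite_SigmaI)
  have c1: "card ?P1 = k * n * n" by (subst card_image) (auto simp: inj_on_def card_cartesian_product)
  have c2: "card ?P2 = k * n" by (subst card_image) (auto simp: inj_on_def card_cartesian_product)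
  have c3: "card ?P3 = k * n" by (subst card_image) (auto simp: inj_on_def card_cartesian_product)
  have c4: "card ?P4 = 3*k" by (subst card_image) (auto simp: inj_on_def)
  have c5: "card ?P5 = 3*k*L" by (subst card_image) (auto simp: inj_on_def card_cartesian_product)
  have c6: "card ?P6 = 3*k*L" by (subst card_image) (auto simp: inj_on_def card_cartesian_product)
  have c7: "card ?P7 = 3*k" by (subst card_image) (auto simp: inj_on_def)
  have c8: "card ?P8 = 3*k" by (subst card_image) (auto simp: inj_on_def)
  have "card (?P1 \<union> ?P2 \<union> ?P3 \<union> ?P4 \<union> ?P5 \<union> ?P6 \<union> ?P7 \<union> ?P8)
      = card ?P1 + card ?P2 + card ?P3 + card ?P4 + card ?P5 + card ?P6 + card ?P7 + card ?P8"
    by (subst card_Un_disjoint, simp, simp, fastforce)+ simp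
  also have "\<dots> = k * n * n + k * n + k * n + 3*k + 3*k*L + 3*k*L + 3*k + 3*k"
    using c1 c2 c3 c4 c5 c6 c7 c8 by simp
  finally show ?thesis using card_mono[OF finE sub] by simp
qed

theorem lemma1:
  fixes k b :: nat and as :: "nat \<Rightarrow> nat" and fr fb :: "nat \<Rightarrow> nat \<Rightarrow> nat"
    and P :: "vtx set set"
  assumes "three_partition_instance k b as"
    and "7 dvd (asum k as)^2"
    and "valid_assign k as fr" and "valid_assign k as fb"
    and "max_division (GA_red k as) (GA_blue k as) (GA_edges k as fr fb) P"
  shows "\<forall>t<k. \<exists>C\<in>P. biclique k as t \<subseteq> C"
proof (rule ccontr)
  assume "\<not> ?thesis"
  then obtain t where t: "t < k" and ns: "\<not> (\<exists>C\<in>P. biclique k as t \<subseteq> C)" by blast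
  define n where "n = asum k as"
  define KRs where "KRs = {KR t j | j. j < n}"
  define KBs where "KBs = {KB t j | j. j < n}"
  have k0: "0 < 3 * k" using t by simp
  have npos: "n > 0"
  proof -
    have "as 0 > 0" using assms(1) k0 by (simp add: three_partition_instance_def)
    moreover have "as 0 \<le> (\<Sum>i<3*k. as i)" using k0 by (intro member_le_sum) auto
    ultimately show ?thesis by (simp add: n_def asum_def)
  qed
  have n7: "n \<ge> 7"
  proof -
    have "7 dvd n" using seven_dvd assms(2) by (simp add: n_def)
    thus ?thesis using npos by (auto elim!: dvdE)
  qed
  define L where "L = n^2 div 7"
  have L7: "7 * L = n^2" using assms(2) by (simp add: L_def n_def)
  have cE: "card (GA_edges k as fr fb) \<ge> k * n * n + k * n + k * n + 3*k + 3*k*L + 3*k*L + 3*k + 3*k"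
    using card_E_lower[OF assms(3,4)] by (simp add: n_def L_def)
  have k1: "k \<ge> 1" using t by simp
  have "k * n * n + k * n + k * n + 3*k + 3*k*L + 3*k*L + 3*k + 3*k = k * (n * n + 2 * n + 9 + 6 * L)"
    by (simp add: algebra_simps)
  also have "\<dots> \<ge> n * n + 2 * n + 9 + 6 * L" using k1 by simp
  finally have cE2: "card (GA_edges k as fr fb) \<ge> n * n + 2 * n + 9 + 6 * L" using cE by linarith
  have "7 * card (GA_edges k as fr fb) \<ge> 13 * n^2 + 14 * n + 63"
    using cE2 L7 by (simp add: power2_eq_square algebra_simps)
  hence "7 * real (card (GA_edges k as fr fb)) \<ge> 13 * (real n)^2 + 14 * real n + 63"
    proof -
    assume h: "7 * card (GA_edges k as fr fb) \<ge> 13 * n^2 + 14 * n + 63"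
    have "real (13 * n^2 + 14 * n + 63) \<le> real (7 * card (GA_edges k as fr fb))"
      using h by (simp only: of_nat_le_iff)
    thus ?thesis by simp
  qed
  hence mbig: "real (card (GA_edges k as fr fb)) * (real n - 3) > (real n + 1)^2 * real n"
    using poly_ineq[of "real n"] n7 by simp
  interpret kg "GA_red k as" "GA_blue k as" "GA_edges k as fr fb" KRs KBs n
  proof
    show "finite (GA_red k as)" by (rule fin_red)
    show "finite (GA_blue k as)" by (rule fin_blue)
    show "GA_red k as \<inter> GA_blue k as = {}" by (rule rb_disj)
    show "GA_edges k as fr fb \<subseteq> GA_red k as \<times> GA_blue k as" by (rule E_sub)
    show "KRs \<subseteq> GA_red k as" using t by (auto simp: KRs_def GA_red_def n_def)
    show "KBs \<subseteq> GA_blue k as" using t by (auto simp: KBs_def GA_blue_def n_def)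
    have "KRs = KR t ` {..<n}" by (auto simp: KRs_def)
    thus "card KRs = n" by (simp add: card_image inj_on_def)
    have "KBs = KB t ` {..<n}" by (auto simp: KBs_def)
    thus "card KBs = n" by (simp add: card_image inj_on_def)
    show "KRs \<times> KBs \<subseteq> GA_edges k as fr fb" using t by (auto simp: KRs_def KBs_def GA_edges_def n_def)
    show "card {e \<in> GA_edges k as fr fb. fst e = v} = n + 1" if "v \<in> KRs" for v
      using that degR_c[OF assms(3) t] by (auto simp: KRs_def n_def)
    show "card {e \<in> GA_edges k as fr fb. snd e = v} = n + 1" if "v \<in> KBs" for v
      using that degB_c[OF assms(4) t] by (auto simp: KBs_def n_def)
    show "0 < n" by (rule npos)
    show "(real n + 1)^2 * real n < real (card (GA_edges k as fr fb)) * (real n - 3)" by (rule mbig)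
  qed
  have Kb: "K = biclique k as t" unfolding K_eq unfolding KRs_def KBs_def biclique_def n_def by auto
  have P: "partition_on (GA_red k as \<union> GA_blue k as) P" using assms(5) by (simp add: max_division_def)
  obtain P' where "partition_on (GA_red k as \<union> GA_blue k as) P'"
      "Qb (GA_red k as) (GA_blue k as) (GA_edges k as fr fb) P' > Qb (GA_red k as) (GA_blue k as) (GA_edges k as fr fb) P"
    using improve[OF P] ns Kb by blast
  thus False using assms(5) by (auto simp: max_division_def)
qed

end
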